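(* Let $R$ be a finite commutative chain ring with maximal ideal $\langle a\rangle$, $a$ of nilpotency index $t$, residue field $\mathbb F_q$ of characteristic $p$. Let $e_1,\dots,e_r$ be positive integers not divisible by $p$, $I=\langle X_1^{e_1}-1,\dots,X_r^{e_r}-1\rangle$, $A=R[X_1,\dots,X_r]/I$, and let $\tau$ be the ring automorphism of $A$ given by $\tau(f(X_1,\dots,X_r)+I)=f(X_1^{e_1-1},\dots,X_r^{e_r-1})+I$. Let $\mathcal K$ be an ideal of $A$ and $G_0,\dots,G_t\in R[X_1,\dots,X_r]$ polynomials such that $\bigcap_{i=0}^t\mathrm{Ann}_A\langle G_i+I\rangle=0$, $\mathrm{Ann}_A\langle G_i+I\rangle+\mathrm{Ann}_A\langle G_j+I\rangle=A$ for all $0\le i<j\le t$, and $\mathcal K=\langle G_1,aG_2,\dots,a^{t-1}G_t\rangle+I$. Then $$\mathcal K^\perp=\langle\tau(G_0),a\tau(G_t),\dots,a^{t-1}\tau(G_2)\rangle+I,$$ and the polynomials $\tau(G_0),\dots,\tau(G_t)$ also satisfy $\bigcap_{i}\mathrm{Ann}_A\langle\tau(G_i)+I\rangle=0$ and pairwise comaximality of the annihilators $\mathrm{Ann}_A\langle \tau(G_i)+I\rangle$.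
   Context: $\tau(G_i)$ denotes $G_i(X_1^{e_1-1},\dots,X_r^{e_r-1})$. $A$ is a free $R$-module with basis the monomials $X_1^{i_1}\cdots X_r^{i_r}$, $0\le i_k<e_k$; elements are identified with coefficient vectors in $R^n$, $n=e_1\cdots e_r$. For $\mathbf x,\mathbf y\in R^n$, $\mathbf x\cdot\mathbf y=\sum_k x_ky_k$, and for a code $\mathcal K$, $\mathcal K^\perp=\{\mathbf x:\mathbf x\cdot\mathbf c=0\ \forall\mathbf c\in\mathcal K\}$. *)

theory Defs
  imports "HOL-Computational_Algebra.Primes"
begin

definition R_ideal :: "'a::comm_ring_1 set \<Rightarrow> bool" where
  "R_ideal S \<longleftrightarrow> 0 \<in> S \<and> (\<forall>x\<in>S. \<forall>y\<in>S. x + y \<in> S) \<and> (\<forall>x. \<forall>y\<in>S. x * y \<in> S)"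

definition R_principal :: "'a::comm_ring_1 \<Rightarrow> 'a set" where
  "R_principal a = range (\<lambda>x. a * x)"

definition R_maximal_ideal :: "'a::comm_ring_1 set \<Rightarrow> bool" where
  "R_maximal_ideal P \<longleftrightarrow> R_ideal P \<and> P \<noteq> UNIV \<and>
     (\<forall>J. R_ideal J \<and> P \<subseteq> J \<longrightarrow> J = P \<or> J = UNIV)"

definition chain_ring :: "'a::comm_ring_1 itself \<Rightarrow> bool" where
  "chain_ring _ \<longleftrightarrow> (\<forall>I J :: 'a set. R_ideal I \<and> R_ideal J \<longrightarrow> I \<subseteq> J \<or> J \<subseteq> I)"

(* ---------- the ring A = R[X_0,...,X_{r-1}]/<X_k^{e_k}-1> ----------
   Variables are indexed 0..r-1.  An element of A is represented by its
   coefficient vector w.r.t. the monomial basis X^i, i \<in> box e r. *)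

definition box :: "(nat \<Rightarrow> nat) \<Rightarrow> nat \<Rightarrow> (nat \<Rightarrow> nat) set" where
  "box e r = {i. (\<forall>k<r. i k < e k) \<and> (\<forall>k\<ge>r. i k = 0)}"

definition Acar :: "(nat \<Rightarrow> nat) \<Rightarrow> nat \<Rightarrow> ((nat \<Rightarrow> nat) \<Rightarrow> 'a::comm_ring_1) set" where
  "Acar e r = {f. \<forall>i. i \<notin> box e r \<longrightarrow> f i = 0}"

definition Aadd :: "((nat \<Rightarrow> nat) \<Rightarrow> 'a::comm_ring_1) \<Rightarrow> ((nat \<Rightarrow> nat) \<Rightarrow> 'a) \<Rightarrow> ((nat \<Rightarrow> nat) \<Rightarrow> 'a)" where
  "Aadd f g = (\<lambda>i. f i + g i)"

definition Azero :: "(nat \<Rightarrow> nat) \<Rightarrow> 'a::comm_ring_1" where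
  "Azero = (\<lambda>i. 0)"

definition Amul :: "(nat \<Rightarrow> nat) \<Rightarrow> nat \<Rightarrow> ((nat \<Rightarrow> nat) \<Rightarrow> 'a::comm_ring_1) \<Rightarrow> ((nat \<Rightarrow> nat) \<Rightarrow> 'a) \<Rightarrow> ((nat \<Rightarrow> nat) \<Rightarrow> 'a)" where
  "Amul e r f g = (\<lambda>i. if i \<in> box e r then
      (\<Sum>j\<in>box e r. \<Sum>l\<in>box e r. if (\<forall>k<r. (j k + l k) mod e k = i k) then f j * g l else 0)
     else 0)"

definition A_ideal :: "(nat \<Rightarrow> nat) \<Rightarrow> nat \<Rightarrow> ((nat \<Rightarrow> nat) \<Rightarrow> 'a::comm_ring_1) set \<Rightarrow> bool" where
  "A_ideal e r K \<longleftrightarrow> K \<subseteq> Acar e r \<and> Azero \<in> K \<and> (\<forall>x\<in>K. \<forall>y\<in>K. Aadd x y \<in> K) \<and>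
      (\<forall>x\<in>Acar e r. \<forall>y\<in>K. Amul e r x y \<in> K)"

definition A_gen :: "(nat \<Rightarrow> nat) \<Rightarrow> nat \<Rightarrow> ((nat \<Rightarrow> nat) \<Rightarrow> 'a::comm_ring_1) set \<Rightarrow> ((nat \<Rightarrow> nat) \<Rightarrow> 'a) set" where
  "A_gen e r S = \<Inter>{K. A_ideal e r K \<and> S \<subseteq> K}"

definition A_ann :: "(nat \<Rightarrow> nat) \<Rightarrow> nat \<Rightarrow> ((nat \<Rightarrow> nat) \<Rightarrow> 'a::comm_ring_1) set \<Rightarrow> ((nat \<Rightarrow> nat) \<Rightarrow> 'a) set" where
  "A_ann e r J = {x \<in> Acar e r. \<forall>y\<in>J. Amul e r x y = Azero}"

definition A_sum :: "((nat \<Rightarrow> nat) \<Rightarrow> 'a::comm_ring_1) set \<Rightarrow> ((nat \<Rightarrow> nat) \<Rightarrow> 'a) set \<Rightarrow> ((nat \<Rightarrow> nat) \<Rightarrow> 'a) set" where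
  "A_sum I J = {Aadd x y | x y. x \<in> I \<and> y \<in> J}"

definition A_dot :: "(nat \<Rightarrow> nat) \<Rightarrow> nat \<Rightarrow> ((nat \<Rightarrow> nat) \<Rightarrow> 'a::comm_ring_1) \<Rightarrow> ((nat \<Rightarrow> nat) \<Rightarrow> 'a) \<Rightarrow> 'a" where
  "A_dot e r x y = (\<Sum>i\<in>box e r. x i * y i)"

definition A_perp :: "(nat \<Rightarrow> nat) \<Rightarrow> nat \<Rightarrow> ((nat \<Rightarrow> nat) \<Rightarrow> 'a::comm_ring_1) set \<Rightarrow> ((nat \<Rightarrow> nat) \<Rightarrow> 'a) set" where
  "A_perp e r K = {x \<in> Acar e r. \<forall>c\<in>K. A_dot e r x c = 0}"

definition is_poly :: "nat \<Rightarrow> ((nat \<Rightarrow> nat) \<Rightarrow> 'a::comm_ring_1) \<Rightarrow> bool" where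
  "is_poly r G \<longleftrightarrow> finite {m. G m \<noteq> 0} \<and> (\<forall>m. G m \<noteq> 0 \<longrightarrow> (\<forall>k\<ge>r. m k = 0))"

definition red :: "(nat \<Rightarrow> nat) \<Rightarrow> nat \<Rightarrow> ((nat \<Rightarrow> nat) \<Rightarrow> 'a::comm_ring_1) \<Rightarrow> ((nat \<Rightarrow> nat) \<Rightarrow> 'a)" where
  "red e r G = (\<lambda>i. if i \<in> box e r then
      (\<Sum>m | G m \<noteq> 0 \<and> (\<forall>k<r. m k mod e k = i k). G m) else 0)"

(* tau(G) = G(X_0^{e_0-1}, ..., X_{r-1}^{e_{r-1}-1}) as a polynomial *)
definition tau_poly :: "(nat \<Rightarrow> nat) \<Rightarrow> ((nat \<Rightarrow> nat) \<Rightarrow> 'a::comm_ring_1) \<Rightarrow> ((nat \<Rightarrow> nat) \<Rightarrow> 'a)" where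
  "tau_poly e G = (\<lambda>m'. \<Sum>m | G m \<noteq> 0 \<and> (\<forall>k. m' k = m k * (e k - 1)). G m)"

definition psmult :: "'a::comm_ring_1 \<Rightarrow> ((nat \<Rightarrow> nat) \<Rightarrow> 'a) \<Rightarrow> ((nat \<Rightarrow> nat) \<Rightarrow> 'a)" where
  "psmult c G = (\<lambda>m. c * G m)"

end

theory Submission
  imports Defs
begin


definition gadd :: "(nat \<Rightarrow> nat) \<Rightarrow> nat \<Rightarrow> (nat \<Rightarrow> nat) \<Rightarrow> (nat \<Rightarrow> nat) \<Rightarrow> (nat \<Rightarrow> nat)" where
  "gadd e r i j = (\<lambda>k. if k < r then (i k + j k) mod e k else 0)"
definition gneg :: "(nat \<Rightarrow> nat) \<Rightarrow> nat \<Rightarrow> (nat \<Rightarrow> nat) \<Rightarrow> (nat \<Rightarrow> nat)" where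
  "gneg e r i = (\<lambda>k. if k < r then (e k - i k) mod e k else 0)"
definition gzero :: "nat \<Rightarrow> nat" where "gzero = (\<lambda>k. 0)"

lemma arith_a0: "0 < (u::nat) \<Longrightarrow> u < E \<Longrightarrow> u * (E - 1) = (u - 1) * E + (E - u)"
proof -
  assume "0 < u" "u < E"
  then obtain v where "u = Suc v" by (cases u) auto
  then show ?thesis using \<open>u < E\<close> by (simp add: algebra_simps diff_mult_distrib2)
qed
lemma arith_a1: "0 < (E::nat) \<Longrightarrow> (m * (E - 1)) mod E = (E - m mod E) mod E"
proof -
  assume E: "0 < E"
  define u where "u = m mod E"
  have u: "u < E" using E by (simp add: u_def)
  have "(m * (E - 1)) mod E = (u * (E - 1)) mod E" by (simp add: u_def mod_mult_left_eq)
  also have "\<dots> = (E - u) mod E"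
  proof (cases "u = 0")
    case True then show ?thesis by simp
  next
    case False
    then have "u * (E - 1) = (u - 1) * E + (E - u)" using u arith_a0 by simp
    then show ?thesis by simp
  qed
  finally show ?thesis by (simp add: u_def)
qed
lemma arith_a2: "0 < (E::nat) \<Longrightarrow> x < E \<Longrightarrow> u < E \<Longrightarrow> (E - u) mod E = x \<longleftrightarrow> u = (E - x) mod E"
  using mod_if by auto
lemma arith_neg: "0 < (E::nat) \<Longrightarrow> x < E \<Longrightarrow> (m * (E - 1)) mod E = x \<longleftrightarrow> m mod E = (E - x) mod E"
  using arith_a1 arith_a2[of E x "m mod E"] by simp

locale Abox =
  fixes e :: "nat \<Rightarrow> nat" and r :: nat
  assumes epos: "\<forall>k<r. 0 < e k"
begin

abbreviation "B \<equiv> box e r"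
abbreviation pl (infixl "\<oplus>" 65) where "pl i j \<equiv> gadd e r i j"
abbreviation ng ("\<ominus>") where "ng i \<equiv> gneg e r i"

lemma finite_box: "finite B"
proof -
  have "B \<subseteq> {f. \<forall>x. (x \<in> {..<r} \<longrightarrow> f x \<in> {..<(\<Sum>k<r. e k)}) \<and> (x \<notin> {..<r} \<longrightarrow> f x = 0)}"
  proof (clarsimp simp: box_def)
    fix f x assume "\<forall>k<r. f k < e k" "x < r"
    then have "f x < e x" by auto
    also have "e x \<le> (\<Sum>k<r. e k)" using \<open>x < r\<close> by (intro member_le_sum) auto
    finally show "f x < (\<Sum>k<r. e k)" .
  qed
  then show ?thesis by (rule finite_subset) (intro finite_set_of_finite_funs; simp)
qed

lemma gzero_box[simp]: "gzero \<in> B" using epos by (auto simp: box_def gzero_def)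
lemma gadd_box[simp]: "i \<oplus> j \<in> B" using epos by (auto simp: box_def gadd_def)
lemma gneg_box[simp]: "\<ominus> i \<in> B" using epos by (auto simp: box_def gneg_def)

lemma gadd_comm: "i \<oplus> j = j \<oplus> i" by (auto simp: gadd_def add.commute)
lemma gadd_assoc: "(i \<oplus> j) \<oplus> l = i \<oplus> (j \<oplus> l)"
  by (auto simp: gadd_def mod_simps add.assoc)
lemma gadd_zero[simp]: "i \<in> B \<Longrightarrow> i \<oplus> gzero = i"
  by (auto simp: gadd_def gzero_def box_def)
lemma gadd_zero_left[simp]: "i \<in> B \<Longrightarrow> gzero \<oplus> i = i"
  by (auto simp: gadd_def gzero_def box_def)
lemma gadd_neg[simp]: "i \<in> B \<Longrightarrow> i \<oplus> \<ominus> i = gzero"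
proof (rule ext)
  fix k assume i: "i \<in> B"
  show "(i \<oplus> \<ominus> i) k = gzero k"
  proof (cases "k < r")
    case True
    then have "i k < e k" using i by (auto simp: box_def)
    then have "(i k + (e k - i k) mod e k) mod e k = 0"
      by (simp add: mod_simps)
    then show ?thesis using True by (simp add: gadd_def gneg_def gzero_def)
  qed (simp add: gadd_def gzero_def)
qed
lemma gneg_add_left[simp]: "i \<in> B \<Longrightarrow> \<ominus> i \<oplus> i = gzero"
  using gadd_neg gadd_comm by metis

lemma neg_unique: "i \<in> B \<Longrightarrow> j \<in> B \<Longrightarrow> i \<oplus> j = gzero \<Longrightarrow> j = \<ominus> i"
proof -
  assume i: "i \<in> B" and j: "j \<in> B" and h: "i \<oplus> j = gzero"
  have "j = j \<oplus> (i \<oplus> \<ominus> i)" using i j by simp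
  also have "\<dots> = (i \<oplus> j) \<oplus> \<ominus> i" by (metis gadd_assoc gadd_comm)
  also have "\<dots> = \<ominus> i" using h by simp
  finally show ?thesis .
qed

lemma gneg_neg[simp]: "i \<in> B \<Longrightarrow> \<ominus> (\<ominus> i) = i"
  by (metis gadd_neg gneg_add_left gneg_box neg_unique)

lemma gneg_add: "i \<in> B \<Longrightarrow> j \<in> B \<Longrightarrow> \<ominus> (i \<oplus> j) = \<ominus> i \<oplus> \<ominus> j"
proof -
  assume ij: "i \<in> B" "j \<in> B"
  have "(i \<oplus> j) \<oplus> (\<ominus> i \<oplus> \<ominus> j) = (i \<oplus> \<ominus> i) \<oplus> (j \<oplus> \<ominus> j)"
    by (metis gadd_assoc gadd_comm)
  also have "\<dots> = gzero" using ij by simp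
  finally show ?thesis using neg_unique[of "i \<oplus> j" "\<ominus> i \<oplus> \<ominus> j"] by simp
qed

lemma cond_iff: "i \<in> B \<Longrightarrow> j \<in> B \<Longrightarrow> l \<in> B \<Longrightarrow>
   (\<forall>k<r. (j k + l k) mod e k = i k) \<longleftrightarrow> l = i \<oplus> \<ominus> j"
proof -
  assume B: "i \<in> B" "j \<in> B" "l \<in> B"
  have "(\<forall>k<r. (j k + l k) mod e k = i k) \<longleftrightarrow> j \<oplus> l = i"
    using B by (auto simp: gadd_def box_def fun_eq_iff)
  also have "\<dots> \<longleftrightarrow> l = i \<oplus> \<ominus> j"
  proof
    assume h: "j \<oplus> l = i"
    have "i \<oplus> \<ominus> j = (l \<oplus> j) \<oplus> \<ominus> j" using h gadd_comm by simp
    also have "\<dots> = l" using B by (simp add: gadd_assoc)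
    finally show "l = i \<oplus> \<ominus> j" by simp
  next
    assume h: "l = i \<oplus> \<ominus> j"
    have "j \<oplus> l = i \<oplus> (\<ominus> j \<oplus> j)" using h by (metis gadd_assoc gadd_comm)
    then show "j \<oplus> l = i" using B by simp
  qed
  finally show ?thesis .
qed

abbreviation "M \<equiv> Amul e r"
abbreviation "C \<equiv> Acar e r"

lemma Amul_alt: "i \<in> B \<Longrightarrow> M f g i = (\<Sum>j\<in>B. f j * g (i \<oplus> \<ominus> j))"
proof -
  assume i: "i \<in> B"
  have "M f g i = (\<Sum>j\<in>B. \<Sum>l\<in>B. if l = i \<oplus> \<ominus> j then f j * g l else 0)"
    using i by (simp add: Amul_def cond_iff cong: sum.cong)
  also have "\<dots> = (\<Sum>j\<in>B. f j * g (i \<oplus> \<ominus> j))"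
    by (rule sum.cong) (simp_all add: sum.delta' finite_box)
  finally show ?thesis .
qed

lemma Amul_out: "i \<notin> B \<Longrightarrow> M f g i = 0" by (simp add: Amul_def)

lemma Amul_car[simp]: "M f g \<in> C" by (simp add: Acar_def Amul_out)

lemma sub_sub[simp]: "i \<in> B \<Longrightarrow> a \<in> B \<Longrightarrow> i \<oplus> \<ominus> (i \<oplus> \<ominus> a) = a"
  by (simp add: gneg_add gadd_assoc) (metis gadd_assoc gadd_comm gadd_neg gadd_zero gneg_box)
lemma add_sub_cancel[simp]: "l \<in> B \<Longrightarrow> m \<in> B \<Longrightarrow> (l \<oplus> m) \<oplus> \<ominus> l = m"
  by (metis gadd_assoc gadd_comm gadd_neg gadd_zero)
lemma add_sub_cancel2[simp]: "l \<in> B \<Longrightarrow> j \<in> B \<Longrightarrow> l \<oplus> (j \<oplus> \<ominus> l) = j"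
  by (metis gadd_assoc gadd_comm gadd_neg gadd_zero)
lemma sub_add: "i \<in> B \<Longrightarrow> l \<in> B \<Longrightarrow> m \<in> B \<Longrightarrow> i \<oplus> \<ominus> (l \<oplus> m) = (i \<oplus> \<ominus> l) \<oplus> \<ominus> m"
  by (simp add: gneg_add gadd_assoc)

lemma sub_sub2[simp]: "i \<in> B \<Longrightarrow> a \<in> B \<Longrightarrow> l \<in> B \<Longrightarrow> i \<oplus> \<ominus> l \<oplus> \<ominus> a \<oplus> l = i \<oplus> \<ominus> a"
  by (metis gadd_assoc gadd_comm gneg_add_left gadd_zero)

lemma Amul_comm: "M f g = M g f"
proof (rule ext)
  fix i show "M f g i = M g f i"
  proof (cases "i \<in> B")
    case True
    have "M f g i = (\<Sum>j\<in>B. f j * g (i \<oplus> \<ominus> j))" using True by (rule Amul_alt)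
    also have "\<dots> = (\<Sum>j\<in>B. g j * f (i \<oplus> \<ominus> j))"
      by (rule sum.reindex_bij_witness[where i="\<lambda>j. i \<oplus> \<ominus> j" and j="\<lambda>j. i \<oplus> \<ominus> j"])
        (use True in \<open>auto simp: mult.commute\<close>)
    also have "\<dots> = M g f i" using True by (rule Amul_alt[symmetric])
    finally show ?thesis .
  qed (simp add: Amul_out)
qed

lemma Amul_assoc: "M (M f g) h = M f (M g h)"
proof (rule ext)
  fix i show "M (M f g) h i = M f (M g h) i"
  proof (cases "i \<in> B")
    case True
    have "M (M f g) h i = (\<Sum>j\<in>B. (\<Sum>l\<in>B. f l * g (j \<oplus> \<ominus> l)) * h (i \<oplus> \<ominus> j))"
      using True by (simp add: Amul_alt)
    also have "\<dots> = (\<Sum>j\<in>B. \<Sum>l\<in>B. f l * (g (j \<oplus> \<ominus> l) * h (i \<oplus> \<ominus> j)))"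
      by (simp add: sum_distrib_right mult.assoc)
    also have "\<dots> = (\<Sum>l\<in>B. \<Sum>j\<in>B. f l * (g (j \<oplus> \<ominus> l) * h (i \<oplus> \<ominus> j)))"
      by (rule sum.swap)
    also have "\<dots> = (\<Sum>l\<in>B. f l * (\<Sum>j\<in>B. g (j \<oplus> \<ominus> l) * h (i \<oplus> \<ominus> j)))"
      by (simp add: sum_distrib_left)
    also have "\<dots> = (\<Sum>l\<in>B. f l * (\<Sum>m\<in>B. g m * h ((i \<oplus> \<ominus> l) \<oplus> \<ominus> m)))"
    proof (rule sum.cong[OF refl])
      fix l assume l: "l \<in> B"
      have "(\<Sum>j\<in>B. g (j \<oplus> \<ominus> l) * h (i \<oplus> \<ominus> j)) = (\<Sum>m\<in>B. g m * h ((i \<oplus> \<ominus> l) \<oplus> \<ominus> m))"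
        by (rule sum.reindex_bij_witness[where i="\<lambda>m. l \<oplus> m" and j="\<lambda>j. j \<oplus> \<ominus> l"])
          (use True l in \<open>auto simp: sub_add\<close>)
      then show "f l * (\<Sum>j\<in>B. g (j \<oplus> \<ominus> l) * h (i \<oplus> \<ominus> j)) = f l * (\<Sum>m\<in>B. g m * h ((i \<oplus> \<ominus> l) \<oplus> \<ominus> m))"
        by simp
    qed
    also have "\<dots> = M f (M g h) i" using True by (simp add: Amul_alt)
    finally show ?thesis .
  qed (simp add: Amul_out)
qed

lemma Amul_lcomm: "M f (M g h) = M g (M f h)"
  by (simp only: Amul_assoc[symmetric] Amul_comm[of f g])

lemmas Amul_ac = Amul_assoc Amul_comm Amul_lcomm

definition mono :: "(nat \<Rightarrow> nat) \<Rightarrow> (nat \<Rightarrow> nat) \<Rightarrow> 'a::comm_ring_1" where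
  "mono h = (\<lambda>j. if j = h then 1 else 0)"
definition smul :: "'a::comm_ring_1 \<Rightarrow> ((nat \<Rightarrow> nat) \<Rightarrow> 'a) \<Rightarrow> ((nat \<Rightarrow> nat) \<Rightarrow> 'a)" where
  "smul c f = (\<lambda>i. c * f i)"
definition tauA :: "((nat \<Rightarrow> nat) \<Rightarrow> 'a::comm_ring_1) \<Rightarrow> ((nat \<Rightarrow> nat) \<Rightarrow> 'a)" where
  "tauA f = (\<lambda>i. if i \<in> B then f (\<ominus> i) else 0)"

lemma gneg_zero[simp]: "\<ominus> gzero = gzero"
  by (metis gadd_zero_left gneg_box gzero_box gadd_neg)

lemma gneg_inj: "i \<in> B \<Longrightarrow> j \<in> B \<Longrightarrow> \<ominus> j = \<ominus> i \<longleftrightarrow> j = i"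
  by (metis gneg_neg)

lemma mono_car[simp]: "h \<in> B \<Longrightarrow> mono h \<in> C" by (auto simp: Acar_def mono_def)

lemma mult_ind1[simp]: "(x::'a::comm_ring_1) * (if P then 1 else 0) = (if P then x else 0)" by simp
lemma mult_ind2[simp]: "(if P then 1 else 0) * (x::'a::comm_ring_1) = (if P then x else 0)" by simp
lemma sub_eq_zero: "i \<in> B \<Longrightarrow> j \<in> B \<Longrightarrow> i \<oplus> \<ominus> j = gzero \<longleftrightarrow> j = i"
  by (metis gadd_neg neg_unique gneg_box gneg_neg)

lemma mono_eval: "i \<in> B \<Longrightarrow> M F (mono (\<ominus> i)) gzero = F i"
  by (simp add: Amul_alt mono_def gneg_inj finite_box cong: if_cong)

lemma Amul_one[simp]: "f \<in> C \<Longrightarrow> M (mono gzero) f = f"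
proof (rule ext)
  fix i assume f: "f \<in> C"
  show "M (mono gzero) f i = f i"
  proof (cases "i \<in> B")
    case True
    have "M (mono gzero) f i = (\<Sum>j\<in>B. (if j = gzero then f (i \<oplus> \<ominus> j) else 0))"
      using True by (simp add: Amul_alt mono_def)
    also have "\<dots> = f i" using True by (simp add: finite_box)
    finally show ?thesis .
  next
    case False
    then show ?thesis using f by (simp add: Amul_out Acar_def)
  qed
qed

lemma Amul_one_right[simp]: "f \<in> C \<Longrightarrow> M f (mono gzero) = f"
  by (subst Amul_comm) (rule Amul_one)

lemma Amul_add_left: "M (Aadd f g) h = Aadd (M f h) (M g h)"
proof (rule ext)
  fix i show "M (Aadd f g) h i = Aadd (M f h) (M g h) i"
    by (cases "i \<in> B") (simp_all add: Amul_alt Amul_out Aadd_def distrib_right sum.distrib)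
qed
lemma Amul_add_right: "M h (Aadd f g) = Aadd (M h f) (M h g)"
  by (simp only: Amul_comm[of h] Amul_add_left)
lemma Amul_diff_left: "M (\<lambda>i. f i - g i) h = (\<lambda>i. M f h i - M g h i)"
proof (rule ext)
  fix i show "M (\<lambda>i. f i - g i) h i = M f h i - M g h i"
    by (cases "i \<in> B") (simp_all add: Amul_alt Amul_out left_diff_distrib sum_subtractf)
qed
lemma Amul_sum_left: "M (\<lambda>x. \<Sum>k\<in>I. F k x) h = (\<lambda>x. \<Sum>k\<in>I. M (F k) h x)"
proof (rule ext)
  fix i show "M (\<lambda>x. \<Sum>k\<in>I. F k x) h i = (\<Sum>k\<in>I. M (F k) h i)"
  proof (cases "i \<in> B")
    case True
    then show ?thesis by (simp only: Amul_alt sum_distrib_right) (rule sum.swap)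
  qed (simp add: Amul_out)
qed
lemma Amul_sum_right: "M h (\<lambda>x. \<Sum>k\<in>I. F k x) = (\<lambda>x. \<Sum>k\<in>I. M h (F k) x)"
  by (simp only: Amul_comm[of h] Amul_sum_left)
lemma Amul_smul_left: "M (smul c f) h = smul c (M f h)"
proof (rule ext)
  fix i show "M (smul c f) h i = smul c (M f h) i"
    by (cases "i \<in> B") (simp_all add: Amul_alt Amul_out smul_def sum_distrib_left mult.assoc)
qed
lemma Amul_smul_right: "M h (smul c f) = smul c (M h f)"
  by (simp only: Amul_comm[of h] Amul_smul_left)
lemma Amul_zero_left[simp]: "M Azero h = Azero"
proof (rule ext)
  fix i show "M Azero h i = Azero i"
    by (cases "i \<in> B") (simp_all add: Amul_alt Amul_out Azero_def)
qed
lemma Amul_zero_right[simp]: "M h Azero = Azero"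
  by (simp only: Amul_comm[of h] Amul_zero_left)
lemma smul_zero[simp]: "smul c Azero = Azero" by (simp add: smul_def Azero_def)
lemma smul_zero_left[simp]: "smul 0 f = Azero" by (simp add: smul_def Azero_def)
lemma smul_one[simp]: "smul 1 f = f" by (simp add: smul_def)
lemma smul_smul: "smul c (smul d f) = smul (c * d) f" by (simp add: smul_def mult.assoc)
lemma smul_car[simp]: "f \<in> C \<Longrightarrow> smul c f \<in> C" by (simp add: smul_def Acar_def)
lemma Aadd_car[simp]: "f \<in> C \<Longrightarrow> g \<in> C \<Longrightarrow> Aadd f g \<in> C" by (simp add: Aadd_def Acar_def)
lemma Azero_car[simp]: "Azero \<in> C" by (simp add: Azero_def Acar_def)

lemma tau_out: "i \<notin> B \<Longrightarrow> tauA f i = 0" by (simp add: tauA_def)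
lemma tau_car[simp]: "tauA f \<in> C" by (simp add: tauA_def Acar_def)
lemma tau_tau[simp]: "f \<in> C \<Longrightarrow> tauA (tauA f) = f"
  by (auto simp: tauA_def fun_eq_iff Acar_def)
lemma tau_zero[simp]: "tauA Azero = Azero" by (simp add: tauA_def Azero_def fun_eq_iff)
lemma tau_add: "tauA (Aadd f g) = Aadd (tauA f) (tauA g)" by (simp add: tauA_def Aadd_def fun_eq_iff)
lemma tau_smul: "tauA (smul c f) = smul c (tauA f)" by (simp add: tauA_def smul_def fun_eq_iff)
lemma tau_mul: "tauA (M f g) = M (tauA f) (tauA g)"
proof (rule ext)
  fix i show "tauA (M f g) i = M (tauA f) (tauA g) i"
  proof (cases "i \<in> B")
    case True
    have "tauA (M f g) i = (\<Sum>j\<in>B. f j * g (\<ominus> i \<oplus> \<ominus> j))"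
      using True by (simp only: tauA_def Amul_alt gneg_box if_True)
    also have "\<dots> = (\<Sum>j\<in>B. f (\<ominus> j) * g (\<ominus> (i \<oplus> \<ominus> j)))"
    proof (rule sum.reindex_bij_witness[where i="\<lambda>j. \<ominus> j" and j="\<lambda>j. \<ominus> j"])
      fix a assume a: "a \<in> B"
      show "\<ominus> (\<ominus> a) = a" using a by simp
      show "\<ominus> a \<in> B" by simp
      have "\<ominus> (i \<oplus> \<ominus> (\<ominus> a)) = \<ominus> i \<oplus> \<ominus> a" using a True by (simp add: gneg_add)
      then show "f (\<ominus> (\<ominus> a)) * g (\<ominus> (i \<oplus> \<ominus> (\<ominus> a))) = f a * g (\<ominus> i \<oplus> \<ominus> a)"
        using a by simp
    qed simp_all
    also have "\<dots> = (\<Sum>j\<in>B. tauA f j * tauA g (i \<oplus> \<ominus> j))"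
      by (rule sum.cong[OF refl]) (simp add: tauA_def)
    also have "\<dots> = M (tauA f) (tauA g) i" using True by (simp only: Amul_alt)
    finally show ?thesis .
  next
    case False
    have "tauA (M f g) i = 0" by (rule tau_out[OF False])
    moreover have "M (tauA f) (tauA g) i = 0" by (rule Amul_out[OF False])
    ultimately show ?thesis by (rule trans[OF _ sym])
  qed
qed

lemma dot_tau: "A_dot e r x c = M (tauA x) c gzero"
proof -
  have "M (tauA x) c gzero = (\<Sum>j\<in>B. tauA x j * c (gzero \<oplus> \<ominus> j))"
    by (rule Amul_alt) simp
  also have "\<dots> = (\<Sum>j\<in>B. x (\<ominus> j) * c (\<ominus> j))"
    by (rule sum.cong[OF refl]) (simp add: tauA_def)
  also have "\<dots> = (\<Sum>j\<in>B. x j * c j)"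
    by (rule sum.reindex_bij_witness[where i="\<lambda>j. \<ominus> j" and j="\<lambda>j. \<ominus> j"]) simp_all
  finally show ?thesis by (simp add: A_dot_def)
qed


abbreviation "Idl \<equiv> A_ideal e r"
abbreviation "Gen \<equiv> A_gen e r"
abbreviation "Ann \<equiv> A_ann e r"

lemma Aadd_zero[simp]: "Aadd Azero Azero = Azero" by (simp add: Aadd_def Azero_def)

lemma car_ideal: "Idl C"
  by (simp add: A_ideal_def)

lemma ann_ideal: "Idl (Ann S)"
  by (auto simp: A_ideal_def A_ann_def Amul_add_left Amul_assoc)

lemma gen_ideal: "S \<subseteq> C \<Longrightarrow> Idl (Gen S)"
  using car_ideal unfolding A_gen_def A_ideal_def by (auto; blast)

lemma gen_sub: "S \<subseteq> Gen S" by (auto simp: A_gen_def)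

lemma gen_least: "Idl J \<Longrightarrow> S \<subseteq> J \<Longrightarrow> Gen S \<subseteq> J" by (auto simp: A_gen_def)

lemma ideal_car: "Idl J \<Longrightarrow> J \<subseteq> C" by (simp add: A_ideal_def)

lemma ideal_mul: "Idl J \<Longrightarrow> x \<in> C \<Longrightarrow> y \<in> J \<Longrightarrow> M x y \<in> J" by (simp add: A_ideal_def)
lemma ideal_mul2: "Idl J \<Longrightarrow> x \<in> C \<Longrightarrow> y \<in> J \<Longrightarrow> M y x \<in> J" by (simp add: A_ideal_def Amul_comm)
lemma ideal_zero: "Idl J \<Longrightarrow> Azero \<in> J" by (simp add: A_ideal_def)
lemma ideal_add: "Idl J \<Longrightarrow> x \<in> J \<Longrightarrow> y \<in> J \<Longrightarrow> Aadd x y \<in> J" by (simp add: A_ideal_def)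

lemma ideal_sum: assumes J: "Idl J" shows "finite I \<Longrightarrow> (\<forall>k\<in>I. F k \<in> J) \<Longrightarrow> (\<lambda>x. \<Sum>k\<in>I. F k x) \<in> J"
proof (induction I rule: finite_induct)
  case empty
  then show ?case using ideal_zero[OF J] by (simp add: Azero_def)
next
  case (insert a I)
  have "(\<lambda>x. \<Sum>k\<in>insert a I. F k x) = Aadd (F a) (\<lambda>x. \<Sum>k\<in>I. F k x)"
    using insert by (simp add: Aadd_def)
  then show ?case using insert ideal_add[OF J] by simp
qed

lemma ann_gen: assumes S: "S \<subseteq> C" shows "Ann (Gen S) = Ann S"
proof
  show "Ann (Gen S) \<subseteq> Ann S" using gen_sub[of S] by (auto simp: A_ann_def)
  show "Ann S \<subseteq> Ann (Gen S)"
  proof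
    fix x assume x: "x \<in> Ann S"
    have "Ann {x} \<inter> C = {c \<in> C. M c x = Azero}" by (auto simp: A_ann_def)
    have "Gen S \<subseteq> Ann {x}"
      using x S by (intro gen_least ann_ideal) (auto simp: A_ann_def Amul_comm)
    then show "x \<in> Ann (Gen S)" using x by (auto simp: A_ann_def Amul_comm)
  qed
qed

lemma ann_single: "g \<in> C \<Longrightarrow> Ann (Gen {g}) = {x \<in> C. M x g = Azero}"
  using ann_gen[of "{g}"] by (simp add: A_ann_def)

lemma finite_car: "finite (C :: ((nat \<Rightarrow> nat) \<Rightarrow> 'a::{comm_ring_1,finite}) set)"
proof -
  have "C = {f :: (nat \<Rightarrow> nat) \<Rightarrow> 'a. \<forall>x. (x \<in> B \<longrightarrow> f x \<in> UNIV) \<and> (x \<notin> B \<longrightarrow> f x = 0)}"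
    by (auto simp: Acar_def)
  then show ?thesis using finite_set_of_finite_funs[OF finite_box finite_UNIV] by simp
qed

lemma tau_ideal: fixes J :: "((nat \<Rightarrow> nat) \<Rightarrow> 'a::comm_ring_1) set" assumes J: "Idl J" shows "Idl (tauA ` J)"
proof -
  have "\<forall>x\<in>(C::((nat \<Rightarrow> nat) \<Rightarrow> 'a) set). \<forall>y\<in>J. M x (tauA y) \<in> tauA ` J"
  proof (intro ballI)
    fix x :: "(nat \<Rightarrow> nat) \<Rightarrow> 'a" and y assume x: "x \<in> C" and y: "y \<in> J"
    have "M x (tauA y) = tauA (M (tauA x) y)" using x by (simp add: tau_mul)
    moreover have "M (tauA x) y \<in> J" using J y by (simp add: ideal_mul)
    ultimately show "M x (tauA y) \<in> tauA ` J" by simp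
  qed
  moreover have "Azero \<in> tauA ` J" using ideal_zero[OF J] tau_zero by force
  moreover have "\<forall>x\<in>J. \<forall>y\<in>J. Aadd (tauA x) (tauA y) \<in> tauA ` J"
    using ideal_add[OF J] by (auto simp: tau_add[symmetric])
  ultimately show ?thesis by (auto simp: A_ideal_def)
qed

lemma tau_img_tau: "X \<subseteq> C \<Longrightarrow> tauA ` tauA ` X = X"
proof -
  assume X: "X \<subseteq> C"
  have "tauA ` tauA ` X = (\<lambda>x. tauA (tauA x)) ` X" by (simp add: image_image)
  also have "\<dots> = (\<lambda>x. x) ` X" by (rule image_cong) (use X in auto)
  finally show ?thesis by simp
qed

lemma gen_tau: "S \<subseteq> C \<Longrightarrow> Gen (tauA ` S) = tauA ` Gen S"
proof
  assume S: "S \<subseteq> C"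
  show "Gen (tauA ` S) \<subseteq> tauA ` Gen S"
    using gen_sub[of S] by (intro gen_least tau_ideal gen_ideal S) auto
  have TS: "tauA ` S \<subseteq> C" by auto
  have "Gen S \<subseteq> tauA ` Gen (tauA ` S)"
  proof (rule gen_least)
    show "Idl (tauA ` Gen (tauA ` S))" by (intro tau_ideal gen_ideal TS)
    have "S = tauA ` tauA ` S" using tau_img_tau[OF S] by simp
    also have "\<dots> \<subseteq> tauA ` Gen (tauA ` S)" using gen_sub[of "tauA ` S"] by auto
    finally show "S \<subseteq> tauA ` Gen (tauA ` S)" .
  qed
  then have "tauA ` Gen S \<subseteq> tauA ` tauA ` Gen (tauA ` S)" by auto
  also have "\<dots> = Gen (tauA ` S)"
    by (rule tau_img_tau) (rule ideal_car[OF gen_ideal[OF TS]])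
  finally show "tauA ` Gen S \<subseteq> Gen (tauA ` S)" .
qed

lemma perp_tau: "Idl K \<Longrightarrow> A_perp e r K = tauA ` Ann K"
proof -
  assume K: "Idl K"
  have key: "x \<in> A_perp e r K \<longleftrightarrow> x \<in> C \<and> tauA x \<in> Ann K" for x
  proof
    assume x: "x \<in> A_perp e r K"
    have "M (tauA x) c = Azero" if c: "c \<in> K" for c
    proof (rule ext)
      fix i show "M (tauA x) c i = Azero i"
      proof (cases "i \<in> B")
        case True
        have "M (tauA x) c i = M (M (tauA x) c) (mono (\<ominus> i)) gzero" using True by (simp add: mono_eval)
        also have "\<dots> = M (tauA x) (M (mono (\<ominus> i)) c) gzero" by (simp add: Amul_assoc Amul_comm[of c])
        also have "\<dots> = A_dot e r x (M (mono (\<ominus> i)) c)" by (simp add: dot_tau)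
        also have "\<dots> = 0" using x ideal_mul[OF K _ c, of "mono (\<ominus> i)"] by (simp add: A_perp_def)
        finally show ?thesis by (simp add: Azero_def)
      qed (simp add: Amul_out Azero_def)
    qed
    then show "x \<in> C \<and> tauA x \<in> Ann K" using x by (simp add: A_perp_def A_ann_def)
  next
    assume x: "x \<in> C \<and> tauA x \<in> Ann K"
    then show "x \<in> A_perp e r K"
      by (auto simp: A_perp_def A_ann_def dot_tau Azero_def)
  qed
  show ?thesis
  proof
    show "A_perp e r K \<subseteq> tauA ` Ann K"
    proof
      fix x assume "x \<in> A_perp e r K"
      then have "x \<in> C" "tauA x \<in> Ann K" using key by auto
      then show "x \<in> tauA ` Ann K" by (metis image_eqI tau_tau)
    qed
    show "tauA ` Ann K \<subseteq> A_perp e r K"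
    proof
      fix x assume "x \<in> tauA ` Ann K"
      then obtain y where y: "y \<in> Ann K" "x = tauA y" by auto
      then have "y \<in> C" by (simp add: A_ann_def)
      then show "x \<in> A_perp e r K" using key y by simp
    qed
  qed
qed


lemma red_car[simp]: "red e r G \<in> C" by (simp add: red_def Acar_def)

lemma red_smul: assumes fin: "finite {m. H m \<noteq> 0}"
  shows "red e r (psmult c H) = smul c (red e r H)"
proof (rule ext)
  fix i show "red e r (psmult c H) i = smul c (red e r H) i"
  proof (cases "i \<in> B")
    case True
    define P where "P = (\<lambda>m::nat\<Rightarrow>nat. \<forall>k<r. m k mod e k = i k)"
    have "red e r (psmult c H) i = (\<Sum>m\<in>{m. c * H m \<noteq> 0 \<and> P m}. c * H m)"
      using True by (simp add: red_def psmult_def P_def)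
    also have "\<dots> = (\<Sum>m\<in>{m. H m \<noteq> 0 \<and> P m}. c * H m)"
      by (rule sum.mono_neutral_left) (auto intro: finite_subset[OF _ fin])
    also have "\<dots> = smul c (red e r H) i"
      using True by (simp add: red_def smul_def P_def sum_distrib_left)
    finally show ?thesis .
  qed (simp add: red_def smul_def)
qed

lemma tau_fin: assumes fin: "finite {m. G m \<noteq> 0}"
  shows "finite {m'. tau_poly e G m' \<noteq> 0}"
proof -
  have "{m'. tau_poly e G m' \<noteq> 0} \<subseteq> (\<lambda>m k. m k * (e k - 1)) ` {m. G m \<noteq> 0}"
  proof
    fix m' assume "m' \<in> {m'. tau_poly e G m' \<noteq> 0}"
    then have "sum G {m. G m \<noteq> 0 \<and> (\<forall>k. m' k = m k * (e k - 1))} \<noteq> 0"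
      by (simp add: tau_poly_def)
    then have "{m. G m \<noteq> 0 \<and> (\<forall>k. m' k = m k * (e k - 1))} \<noteq> {}"
      by (metis sum.empty)
    then obtain m where "G m \<noteq> 0" "\<forall>k. m' k = m k * (e k - 1)" by auto
    then show "m' \<in> (\<lambda>m k. m k * (e k - 1)) ` {m. G m \<noteq> 0}"
      by (intro image_eqI[of _ _ m]) (auto simp: fun_eq_iff)
  qed
  then show ?thesis using fin by (rule finite_subset[OF _ finite_imageI])
qed

lemma red_tau: assumes G: "is_poly r G"
  shows "red e r (tau_poly e G) = tauA (red e r G)"
proof (rule ext)
  fix i show "red e r (tau_poly e G) i = tauA (red e r G) i"
  proof (cases "i \<in> B")
    case True
    define S where "S = {m. G m \<noteq> 0}"
    define \<phi> where "\<phi> = (\<lambda>(m::nat\<Rightarrow>nat) k. m k * (e k - 1))"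
    define P where "P = (\<lambda>m'::nat\<Rightarrow>nat. \<forall>k<r. m' k mod e k = i k)"
    have finS: "finite S" using G by (simp add: is_poly_def S_def)
    have T: "tau_poly e G m' = (\<Sum>m\<in>{m\<in>S. \<phi> m = m'}. G m)" for m'
      unfolding tau_poly_def S_def \<phi>_def by (rule sum.cong) (auto simp: fun_eq_iff)
    have "red e r (tau_poly e G) i = (\<Sum>m'\<in>{m'. tau_poly e G m' \<noteq> 0 \<and> P m'}. tau_poly e G m')"
      using True by (simp add: red_def P_def)
    also have "\<dots> = (\<Sum>m'\<in>\<phi> ` S \<inter> Collect P. tau_poly e G m')"
    proof (rule sum.mono_neutral_left)
      show "finite (\<phi> ` S \<inter> Collect P)" using finS by simp
      show "{m'. tau_poly e G m' \<noteq> 0 \<and> P m'} \<subseteq> \<phi> ` S \<inter> Collect P"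
      proof
        fix m' assume h: "m' \<in> {m'. tau_poly e G m' \<noteq> 0 \<and> P m'}"
        then have "(\<Sum>m\<in>{m\<in>S. \<phi> m = m'}. G m) \<noteq> 0" using T[of m'] by simp
        then have "{m\<in>S. \<phi> m = m'} \<noteq> {}" by (metis sum.empty)
        then show "m' \<in> \<phi> ` S \<inter> Collect P" using h by auto
      qed
      show "\<forall>m'\<in>\<phi> ` S \<inter> Collect P - {m'. tau_poly e G m' \<noteq> 0 \<and> P m'}. tau_poly e G m' = 0"
        by auto
    qed
    also have "\<dots> = (\<Sum>m'\<in>\<phi> ` S \<inter> Collect P. \<Sum>m\<in>{m\<in>{m\<in>S. P (\<phi> m)}. \<phi> m = m'}. G m)"
      by (rule sum.cong[OF refl]) (auto simp: T intro!: sum.cong)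
    also have "\<dots> = (\<Sum>m\<in>{m\<in>S. P (\<phi> m)}. G m)"
      by (rule sum.group) (auto simp: finS)
    also have "\<dots> = (\<Sum>m\<in>{m. G m \<noteq> 0 \<and> (\<forall>k<r. m k mod e k = gneg e r i k)}. G m)"
    proof (rule sum.cong)
      have "P (\<phi> m) \<longleftrightarrow> (\<forall>k<r. m k mod e k = gneg e r i k)" for m
      proof -
        have "(m k * (e k - 1)) mod e k = i k \<longleftrightarrow> m k mod e k = gneg e r i k" if k: "k < r" for k
          using arith_neg[of "e k" "i k" "m k"] epos True k by (simp add: gneg_def box_def)
        then show ?thesis by (simp add: P_def \<phi>_def)
      qed
      then show "{m\<in>S. P (\<phi> m)} = {m. G m \<noteq> 0 \<and> (\<forall>k<r. m k mod e k = gneg e r i k)}"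
        by (auto simp: S_def)
    qed simp
    also have "\<dots> = tauA (red e r G) i"
      using True by (simp add: tauA_def red_def)
    finally show ?thesis .
  qed (simp add: red_def tauA_def)
qed


lemma tau_eq_zero: "y \<in> C \<Longrightarrow> tauA y = Azero \<longleftrightarrow> y = Azero"
  by (metis tau_tau tau_zero)

lemma ann_tau_iff: "x \<in> C \<Longrightarrow> g \<in> C \<Longrightarrow> M x (tauA g) = Azero \<longleftrightarrow> M (tauA x) g = Azero"
proof -
  assume x: "x \<in> C" and g: "g \<in> C"
  have "M x (tauA g) = tauA (M (tauA x) g)" using x by (simp add: tau_mul)
  then show ?thesis by (simp add: tau_eq_zero)
qed

lemma comax_orth:
  assumes x: "x \<in> C" and y: "y \<in> C"
    and cm: "A_sum {z \<in> C. M z x = Azero} {z \<in> C. M z y = Azero} = C"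
  shows "M x y = Azero"
proof -
  have "mono gzero \<in> C" by simp
  then obtain u v where uv: "mono gzero = Aadd u v" "u \<in> C" "M u x = Azero" "v \<in> C" "M v y = Azero"
    using cm unfolding A_sum_def by blast
  have "M x y = M (mono gzero) (M x y)" by simp
  also have "\<dots> = Aadd (M (M u x) y) (M x (M v y))"
    by (simp add: uv(1) Amul_add_left Amul_assoc Amul_lcomm[of v x])
  also have "\<dots> = Azero" using uv by simp
  finally show ?thesis .
qed

lemma orth_unit:
  fixes g :: "nat \<Rightarrow> ((nat \<Rightarrow> nat) \<Rightarrow> 'a::{comm_ring_1,finite})"
  assumes gC: "\<forall>i\<le>t. g i \<in> C"
    and orth: "\<forall>i\<le>t. \<forall>j\<le>t. i \<noteq> j \<longrightarrow> M (g i) (g j) = Azero"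
    and int: "(\<Inter>i\<in>{0..t}. {x \<in> C. M x (g i) = Azero}) = {Azero}"
  shows "\<exists>w\<in>C. (\<forall>x\<in>C. x = (\<lambda>y. \<Sum>i\<in>{0..t}. M (M x w) (g i) y)) \<and>
      (\<forall>j\<le>t. M w (g j) = M (M w (g j)) (M w (g j)))"
proof -
  define s where "s = (\<lambda>y. \<Sum>i\<in>{0..t}. g i y)"
  have Ms: "M s (g j) = M (g j) (g j)" if j: "j \<le> t" for j
  proof -
    have "M s (g j) = (\<lambda>y. \<Sum>i\<in>{0..t}. M (g i) (g j) y)" by (simp add: s_def Amul_sum_left)
    also have "\<dots> = (\<lambda>y. \<Sum>i\<in>{0..t}. if i = j then M (g j) (g j) y else 0)"
      using orth j by (intro ext sum.cong) (auto simp: Azero_def)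
    also have "\<dots> = M (g j) (g j)" using j by (simp add: sum.delta')
    finally show ?thesis .
  qed
  have zero: "d = Azero" if d: "d \<in> C" "M d s = Azero" for d
  proof -
    have "M d (g i) = Azero" if i: "i \<le> t" for i
    proof -
      have "M (M d (g i)) (g j) = Azero" if j: "j \<le> t" for j
      proof (cases "i = j")
        case True
        have "M (M d (g i)) (g j) = M (M d s) (g i)" using True Ms[OF i] by (simp add: Amul_assoc)
        then show ?thesis using d by simp
      next
        case False
        then show ?thesis using orth i j by (simp add: Amul_assoc)
      qed
      then have "M d (g i) \<in> (\<Inter>i\<in>{0..t}. {x \<in> C. M x (g i) = Azero})" by auto
      then show ?thesis using int by auto
    qed
    then have "d \<in> (\<Inter>i\<in>{0..t}. {x \<in> C. M x (g i) = Azero})" using d by auto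
    then show ?thesis using int by auto
  qed
  have inj: "inj_on (\<lambda>y. M y s) C"
  proof (rule inj_onI)
    fix y1 y2 assume y: "y1 \<in> C" "y2 \<in> C" "M y1 s = M y2 s"
    have "(\<lambda>i. y1 i - y2 i) \<in> C" using y by (auto simp: Acar_def)
    moreover have "M (\<lambda>i. y1 i - y2 i) s = Azero" using y by (simp add: Amul_diff_left Azero_def)
    ultimately have "(\<lambda>i. y1 i - y2 i) = Azero" by (rule zero)
    then show "y1 = y2" by (auto simp: fun_eq_iff Azero_def)
  qed
  have "(\<lambda>y. M y s) ` C = C"
    by (rule endo_inj_surj[OF finite_car _ inj]) auto
  moreover have "mono gzero \<in> C" by simp
  ultimately obtain w where w: "w \<in> C" "M w s = mono gzero" by (metis imageE)
  have dec: "x = (\<lambda>y. \<Sum>i\<in>{0..t}. M (M x w) (g i) y)" if x: "x \<in> C" for x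
  proof -
    have "x = M x (M w s)" using x w by simp
    also have "\<dots> = M (M x w) s" by (simp add: Amul_assoc)
    also have "\<dots> = (\<lambda>y. \<Sum>i\<in>{0..t}. M (M x w) (g i) y)" by (simp add: s_def Amul_sum_right)
    finally show ?thesis .
  qed
  have idem: "M w (g j) = M (M w (g j)) (M w (g j))" if j: "j \<le> t" for j
  proof -
    have "M w (g j) = M (M w (g j)) (M w s)" using w by simp
    also have "\<dots> = M w (M w (M (g j) s))" by (simp only: Amul_assoc Amul_lcomm[of "g j" w])
    also have "\<dots> = M w (M w (M (g j) (g j)))" using Ms[OF j] by (simp add: Amul_comm[of "g j" s])
    also have "\<dots> = M (M w (g j)) (M w (g j))" by (simp only: Amul_assoc Amul_lcomm[of "g j" w])
    finally show ?thesis .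
  qed
  show ?thesis using w dec idem by blast
qed

end


lemma principal_ideal: "R_ideal (R_principal (y::'a::comm_ring_1))"
  unfolding R_ideal_def R_principal_def
proof (intro conjI ballI allI)
  show "0 \<in> range ((*) y)" by (rule range_eqI[of _ _ 0]) simp
  fix u v assume "u \<in> range ((*) y)" "v \<in> range ((*) y)"
  then obtain u' v' where "u = y * u'" "v = y * v'" by auto
  then show "u + v \<in> range ((*) y)" by (intro range_eqI[of _ _ "u' + v'"]) (simp add: distrib_left)
next
  fix x v assume "v \<in> range ((*) y)"
  then obtain v' where "v = y * v'" by auto
  then show "x * v \<in> range ((*) y)" by (intro range_eqI[of _ _ "x * v'"]) (simp add: mult.left_commute)
qed

lemma chain_ann:
  fixes a :: "'a::comm_ring_1"
  assumes chain: "chain_ring TYPE('a)"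
    and maxid: "R_maximal_ideal (R_principal a)"
    and nil: "a ^ t = 0" "\<forall>s<t. a ^ s \<noteq> 0"
    and st: "s \<le> t" and c: "a ^ s * c = 0"
  shows "\<exists>d. c = a ^ (t - s) * d"
proof (cases "c = 0")
  case True then show ?thesis by (intro exI[of _ 0]) simp
next
  case False
  define Ks where "Ks = {k. \<exists>y. c = a ^ k * y}"
  have Ks_sub: "Ks \<subseteq> {..<t}"
  proof
    fix k assume "k \<in> Ks"
    then obtain y where y: "c = a ^ k * y" by (auto simp: Ks_def)
    show "k \<in> {..<t}"
    proof (rule ccontr)
      assume "k \<notin> {..<t}"
      then have "a ^ k = a ^ t * a ^ (k - t)" by (simp add: power_add[symmetric])
      then have "a ^ k = 0" using nil by simp
      then show False using y False by simp
    qed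
  qed
  have "0 \<in> Ks" by (auto simp: Ks_def intro: exI[of _ c])
  define k where "k = Max Ks"
  have finK: "finite Ks" using Ks_sub finite_subset by blast
  have "k \<in> Ks" using finK \<open>0 \<in> Ks\<close> by (auto simp: k_def intro: Max_in)
  then obtain y where y: "c = a ^ k * y" by (auto simp: Ks_def)
  have yna: "y \<notin> R_principal a"
  proof
    assume "y \<in> R_principal a"
    then obtain z where "y = a * z" by (auto simp: R_principal_def)
    then have "c = a ^ (Suc k) * z" using y by (simp add: mult.assoc)
    then have "Suc k \<in> Ks" by (auto simp: Ks_def)
    then have "Suc k \<le> k" using finK by (simp add: k_def)
    then show False by simp
  qed
  have "\<exists>z. 1 = y * z"
  proof -
    have "R_principal y \<subseteq> R_principal a \<or> R_principal a \<subseteq> R_principal y"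
      using chain principal_ideal unfolding chain_ring_def by blast
    moreover have "y \<in> R_principal y" by (auto simp: R_principal_def intro: image_eqI[of _ _ 1])
    ultimately have "R_principal a \<subseteq> R_principal y" using yna by blast
    then have "R_principal y = R_principal a \<or> R_principal y = UNIV"
      using maxid principal_ideal unfolding R_maximal_ideal_def by blast
    then have "R_principal y = UNIV" using yna \<open>y \<in> R_principal y\<close> by auto
    then have "1 \<in> R_principal y" by simp
    then show ?thesis by (auto simp: R_principal_def)
  qed
  then obtain z where z: "1 = y * z" by blast
  have "a ^ (s + k) = 0"
  proof -
    have "a ^ (s + k) * y = 0" using c y by (simp add: power_add mult.assoc)
    then have "a ^ (s + k) * y * z = 0" by simp
    then show ?thesis using z by (simp add: mult.assoc)
  qed
  then have "t \<le> s + k" using nil(2) by (meson not_le)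
  then have "k = (t - s) + (k - (t - s))" by arith
  then have "a ^ k = a ^ (t - s) * a ^ (k - (t - s))" by (metis power_add)
  then have "c = a ^ (t - s) * (a ^ (k - (t - s)) * y)"
    using y by (simp add: mult.assoc)
  then show ?thesis by blast
qed


theorem mainTheorem9:
  fixes a :: "'a::{comm_ring_1, finite}"
    and t p r :: nat and e :: "nat \<Rightarrow> nat"
    and G :: "nat \<Rightarrow> ((nat \<Rightarrow> nat) \<Rightarrow> 'a)"
    and K :: "((nat \<Rightarrow> nat) \<Rightarrow> 'a) set"
  assumes chain: "chain_ring TYPE('a)"
    and maxid: "R_maximal_ideal (R_principal a)"
    and nil: "a ^ t = 0" "\<forall>s<t. a ^ s \<noteq> 0"
    and charp: "prime p" "of_nat p \<in> R_principal a"
    and e_pos: "\<forall>k<r. 0 < e k"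
    and e_coprime: "\<forall>k<r. \<not> p dvd e k"
    and polys: "\<forall>i\<le>t. is_poly r (G i)"
    and Kideal: "A_ideal e r K"
    and ann_int: "(\<Inter>i\<in>{0..t}. A_ann e r (A_gen e r {red e r (G i)})) = {Azero}"
    and ann_comax: "\<forall>i j. i < j \<and> j \<le> t \<longrightarrow>
        A_sum (A_ann e r (A_gen e r {red e r (G i)})) (A_ann e r (A_gen e r {red e r (G j)})) = Acar e r"
    and Kdef: "K = A_gen e r {red e r (psmult (a ^ (j - 1)) (G j)) | j. 1 \<le> j \<and> j \<le> t}"
  shows "A_perp e r K = A_gen e r ({red e r (tau_poly e (G 0))} \<union>
             {red e r (psmult (a ^ j) (tau_poly e (G (t + 1 - j)))) | j. 1 \<le> j \<and> j \<le> t - 1})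
    \<and> (\<Inter>i\<in>{0..t}. A_ann e r (A_gen e r {red e r (tau_poly e (G i))})) = {Azero}
    \<and> (\<forall>i j. i < j \<and> j \<le> t \<longrightarrow>
        A_sum (A_ann e r (A_gen e r {red e r (tau_poly e (G i))}))
              (A_ann e r (A_gen e r {red e r (tau_poly e (G j))})) = Acar e r)"
  proof -
  interpret Abox e r using e_pos by unfold_locales
  define g where "g = (\<lambda>i. red e r (G i))"
  have gC: "\<forall>i\<le>t. g i \<in> Acar e r" by (simp add: g_def)
  have finG: "finite {m. G i m \<noteq> 0}" if "i \<le> t" for i using polys that by (simp add: is_poly_def)
  have Bann0: "A_ann e r (A_gen e r {red e r (G i)}) = {x \<in> Acar e r. Amul e r x (g i) = Azero}" for i
    unfolding g_def by (rule ann_single) simp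
  have int': "(\<Inter>i\<in>{0..t}. {x \<in> Acar e r. Amul e r x (g i) = Azero}) = {Azero}"
    using ann_int by (simp add: Bann0)
  have comax': "\<forall>i j. i < j \<and> j \<le> t \<longrightarrow>
      A_sum {x \<in> Acar e r. Amul e r x (g i) = Azero} {x \<in> Acar e r. Amul e r x (g j) = Azero} = Acar e r"
    using ann_comax by (simp add: Bann0)
  have orth: "\<forall>i\<le>t. \<forall>j\<le>t. i \<noteq> j \<longrightarrow> Amul e r (g i) (g j) = Azero"
  proof (intro allI impI)
    fix i j assume ij: "i \<le> t" "j \<le> t" "i \<noteq> j"
    show "Amul e r (g i) (g j) = Azero"
    proof (cases "i < j")
      case True
      then show ?thesis using comax' ij gC by (intro comax_orth) auto
    next
      case False
      then have "j < i" using ij by simp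
      then have "Amul e r (g j) (g i) = Azero" using comax' ij gC by (intro comax_orth) auto
      then show ?thesis by (simp add: Amul_comm)
    qed
  qed
  obtain w where w: "w \<in> Acar e r"
    and dec: "\<forall>x\<in>Acar e r. x = (\<lambda>y. \<Sum>i\<in>{0..t}. Amul e r (Amul e r x w) (g i) y)"
    and idem: "\<forall>j\<le>t. Amul e r w (g j) = Amul e r (Amul e r w (g j)) (Amul e r w (g j))"
    using orth_unit[OF gC orth int'] by blast
  have sann: "\<exists>z\<in>Acar e r. y = smul (a ^ (t - s)) z"
    if y: "y \<in> Acar e r" "smul (a ^ s) y = Azero" and s: "s \<le> t" for y s
  proof -
    have "\<forall>i. \<exists>d. y i = a ^ (t - s) * d"
    proof
      fix i
      have "a ^ s * y i = 0" using y(2) by (simp add: smul_def Azero_def fun_eq_iff)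
      then show "\<exists>d. y i = a ^ (t - s) * d" using chain_ann[OF chain maxid nil s] by blast
    qed
    then obtain D where D: "\<forall>i. y i = a ^ (t - s) * D i" by metis
    define z where "z = (\<lambda>i. if i \<in> box e r then D i else 0)"
    have "z \<in> Acar e r" by (simp add: z_def Acar_def)
    moreover have "y = smul (a ^ (t - s)) z"
      using y(1) D by (auto simp: fun_eq_iff smul_def z_def Acar_def)
    ultimately show ?thesis by blast
  qed
  define SK where "SK = {smul (a ^ (j - 1)) (g j) | j. 1 \<le> j \<and> j \<le> t}"
  have SKeq: "{red e r (psmult (a ^ (j - 1)) (G j)) | j. 1 \<le> j \<and> j \<le> t} = SK"
  proof -
    have rs: "red e r (psmult (a ^ (j - 1)) (G j)) = smul (a ^ (j - 1)) (g j)" if "j \<le> t" for j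
      using finG[OF that] by (simp add: g_def red_smul)
    show ?thesis unfolding SK_def using rs by (metis (no_types, opaque_lifting))
  qed
  have SKC: "SK \<subseteq> Acar e r" by (auto simp: SK_def g_def)
  have Kgen: "K = A_gen e r SK" using Kdef SKeq by simp
  have AnnK: "A_ann e r K = {x \<in> Acar e r. \<forall>j. 1 \<le> j \<and> j \<le> t \<longrightarrow> Amul e r x (smul (a ^ (j - 1)) (g j)) = Azero}"
    unfolding Kgen ann_gen[OF SKC] by (auto simp: A_ann_def SK_def)
  define SL where "SL = {g 0} \<union> {smul (a ^ j) (g (t + 1 - j)) | j. 1 \<le> j \<and> j \<le> t - 1}"
  have SLC: "SL \<subseteq> Acar e r" by (auto simp: SL_def g_def)
  have GL: "A_gen e r SL \<subseteq> A_ann e r K"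
  proof (rule gen_least[OF ann_ideal])
    show "SL \<subseteq> A_ann e r K"
    proof
      fix u assume "u \<in> SL"
      then consider "u = g 0" | i where "u = smul (a ^ i) (g (t + 1 - i))" "1 \<le> i" "i \<le> t - 1"
        by (auto simp: SL_def)
      then show "u \<in> A_ann e r K"
      proof cases
        case 1
        have "Amul e r (g 0) (smul (a ^ (j - 1)) (g j)) = Azero" if "1 \<le> j" "j \<le> t" for j
          using orth that by (simp add: Amul_smul_right)
        then show ?thesis using 1 by (simp add: AnnK g_def)
      next
        case (2 i)
        have "Amul e r (smul (a ^ i) (g (t + 1 - i))) (smul (a ^ (j - 1)) (g j)) = Azero"
          if j: "1 \<le> j" "j \<le> t" for j
        proof (cases "t + 1 - i = j")
          case True
          then have "i + (j - 1) = t" using 2 j by simp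
          then have "a ^ i * a ^ (j - 1) = a ^ t" by (metis power_add)
          then have z: "a ^ i * a ^ (j - 1) = 0" using nil(1) by simp
          have "Amul e r (smul (a ^ i) (g (t + 1 - i))) (smul (a ^ (j - 1)) (g j)) =
              smul (a ^ i) (smul (a ^ (j - 1)) (Amul e r (g (t + 1 - i)) (g j)))"
            by (simp only: Amul_smul_left Amul_smul_right smul_smul mult.commute)
          also have "\<dots> = smul (a ^ i * a ^ (j - 1)) (Amul e r (g (t + 1 - i)) (g j))"
            by (simp only: smul_smul)
          finally show ?thesis using z by simp
        next
          case False
          then show ?thesis using orth 2 j by (simp add: Amul_smul_right Amul_smul_left)
        qed
        then show ?thesis using 2 by (simp add: AnnK g_def)
      qed
    qed
  qed
  have LG: "A_ann e r K \<subseteq> A_gen e r SL"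
  proof
    fix x assume x: "x \<in> A_ann e r K"
    then have xC: "x \<in> Acar e r" by (simp add: AnnK)
    have genI: "Idl (A_gen e r SL)" by (rule gen_ideal[OF SLC])
    have "(\<lambda>y. \<Sum>i\<in>{0..t}. Amul e r (Amul e r x w) (g i) y) \<in> A_gen e r SL"
    proof (rule ideal_sum[OF genI], simp, intro ballI)
      fix i assume i: "i \<in> {0..t}"
      show "Amul e r (Amul e r x w) (g i) \<in> A_gen e r SL"
      proof (cases "i = 0")
        case True
        then show ?thesis using gen_sub[of SL] by (intro ideal_mul[OF genI]) (auto simp: SL_def w xC)
      next
        case False
        then have "1 \<le> i" by simp
        then have xi: "smul (a ^ (i - 1)) (Amul e r x (g i)) = Azero"
          using x i by (simp add: AnnK Amul_smul_right)
        show ?thesis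
        proof (cases "i = 1")
          case True
          then have "Amul e r x (g i) = Azero" using xi by simp
          moreover have "Amul e r (Amul e r x w) (g i) = Amul e r w (Amul e r x (g i))"
            by (simp only: Amul_assoc Amul_lcomm[of w x] Amul_comm[of w x])
          ultimately have "Amul e r (Amul e r x w) (g i) = Azero" by simp
          then show ?thesis using ideal_zero[OF genI] by simp
        next
          case False
          then have i2: "2 \<le> i" using \<open>1 \<le> i\<close> by simp
          obtain z where z: "z \<in> Acar e r" "Amul e r x (g i) = smul (a ^ (t - (i - 1))) z"
          proof -
            have "i - 1 \<le> t" using i by simp
            then show ?thesis using that sann[OF Amul_car xi] by blast
          qed
          define c where "c = a ^ (t + 1 - i)"
          have zc: "Amul e r x (g i) = smul c z" using z i2 i by (simp add: c_def Suc_diff_le)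
          have mem: "smul c (g i) \<in> SL"
          proof -
            have "t + 1 - (t + 1 - i) = i" using i by auto
            moreover have "1 \<le> t + 1 - i" "t + 1 - i \<le> t - 1" using i i2 by auto
            ultimately have "smul (a ^ (t + 1 - i)) (g i) = smul (a ^ (t + 1 - i)) (g (t + 1 - (t + 1 - i)))
                \<and> 1 \<le> t + 1 - i \<and> t + 1 - i \<le> t - 1" by simp
            then have "smul (a ^ (t + 1 - i)) (g i) \<in> {smul (a ^ j) (g (t + 1 - j)) | j. 1 \<le> j \<and> j \<le> t - 1}"
              by blast
            then show ?thesis unfolding SL_def c_def by (rule UnI2)
          qed
          have "Amul e r (Amul e r x w) (g i) = Amul e r x (Amul e r w (g i))" by (simp add: Amul_assoc)
          also have "\<dots> = Amul e r x (Amul e r (Amul e r w (g i)) (Amul e r w (g i)))"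
            using idem i by simp
          also have "\<dots> = Amul e r (Amul e r x (g i)) (Amul e r (Amul e r w w) (g i))"
            by (simp only: Amul_assoc Amul_comm Amul_lcomm)
          also have "\<dots> = Amul e r (Amul e r z (Amul e r w w)) (smul c (g i))"
            by (simp add: zc Amul_smul_left Amul_smul_right Amul_assoc)
          finally show ?thesis
            using mem gen_sub[of SL] by (auto intro!: ideal_mul[OF genI] simp: z w)
        qed
      qed
    qed
    then show "x \<in> A_gen e r SL" using dec xC by simp
  qed
  have AnnL: "A_ann e r K = A_gen e r SL" using GL LG by blast
  have Sdual: "{red e r (tau_poly e (G 0))} \<union>
             {red e r (psmult (a ^ j) (tau_poly e (G (t + 1 - j)))) | j. 1 \<le> j \<and> j \<le> t - 1} = tauA ` SL"
  proof -
    have e0: "red e r (tau_poly e (G 0)) = tauA (g 0)" using polys by (simp add: g_def red_tau)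
    have ej: "red e r (psmult (a ^ j) (tau_poly e (G (t + 1 - j)))) = tauA (smul (a ^ j) (g (t + 1 - j)))"
      if "1 \<le> j" for j
    proof -
      have le: "t + 1 - j \<le> t" using that by simp
      then show ?thesis using polys finG[OF le]
        by (simp add: g_def red_smul tau_fin red_tau tau_smul)
    qed
    show ?thesis unfolding SL_def using e0 ej by auto
  qed
  have part1: "A_perp e r K = A_gen e r ({red e r (tau_poly e (G 0))} \<union>
             {red e r (psmult (a ^ j) (tau_poly e (G (t + 1 - j)))) | j. 1 \<le> j \<and> j \<le> t - 1})"
    unfolding Sdual perp_tau[OF Kideal] AnnL gen_tau[OF SLC] ..
  have Bt: "A_ann e r (A_gen e r {red e r (tau_poly e (G i))}) = {x \<in> Acar e r. Amul e r x (tauA (g i)) = Azero}"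
    if "i \<le> t" for i
    using polys that by (simp add: ann_single red_tau g_def)
  have part2: "(\<Inter>i\<in>{0..t}. A_ann e r (A_gen e r {red e r (tau_poly e (G i))})) = {Azero}"
  proof -
    have "(\<Inter>i\<in>{0..t}. A_ann e r (A_gen e r {red e r (tau_poly e (G i))})) =
          (\<Inter>i\<in>{0..t}. {x \<in> Acar e r. Amul e r x (tauA (g i)) = Azero})"
      using Bt by simp
    also have "\<dots> = {Azero}"
    proof
      show "{Azero} \<subseteq> (\<Inter>i\<in>{0..t}. {x \<in> Acar e r. Amul e r x (tauA (g i)) = Azero})" by auto
      show "(\<Inter>i\<in>{0..t}. {x \<in> Acar e r. Amul e r x (tauA (g i)) = Azero}) \<subseteq> {Azero}"
      proof
        fix x assume x: "x \<in> (\<Inter>i\<in>{0..t}. {x \<in> Acar e r. Amul e r x (tauA (g i)) = Azero})"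
        then have xC: "x \<in> Acar e r" by auto
        have "tauA x \<in> (\<Inter>i\<in>{0..t}. {x \<in> Acar e r. Amul e r x (g i) = Azero})"
          using x by (auto simp: ann_tau_iff g_def)
        then have "tauA x = Azero" using int' by auto
        then show "x \<in> {Azero}" using xC by (simp add: tau_eq_zero)
      qed
    qed
    finally show ?thesis .
  qed
  have part3: "\<forall>i j. i < j \<and> j \<le> t \<longrightarrow>
        A_sum (A_ann e r (A_gen e r {red e r (tau_poly e (G i))}))
              (A_ann e r (A_gen e r {red e r (tau_poly e (G j))})) = Acar e r"
  proof (intro allI impI)
    fix i j assume ij: "i < j \<and> j \<le> t"
    have eq: "A_sum (A_ann e r (A_gen e r {red e r (tau_poly e (G i))}))
              (A_ann e r (A_gen e r {red e r (tau_poly e (G j))})) =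
          A_sum {x \<in> Acar e r. Amul e r x (tauA (g i)) = Azero} {x \<in> Acar e r. Amul e r x (tauA (g j)) = Azero}"
      using Bt ij by simp
    have "A_sum {x \<in> Acar e r. Amul e r x (tauA (g i)) = Azero} {x \<in> Acar e r. Amul e r x (tauA (g j)) = Azero} = Acar e r"
    proof
      show "A_sum {x \<in> Acar e r. Amul e r x (tauA (g i)) = Azero} {x \<in> Acar e r. Amul e r x (tauA (g j)) = Azero} \<subseteq> Acar e r"
        by (auto simp: A_sum_def)
      show "Acar e r \<subseteq> A_sum {x \<in> Acar e r. Amul e r x (tauA (g i)) = Azero} {x \<in> Acar e r. Amul e r x (tauA (g j)) = Azero}"
      proof
        fix x :: "(nat \<Rightarrow> nat) \<Rightarrow> 'a" assume xC: "x \<in> Acar e r"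
        have "tauA x \<in> A_sum {x \<in> Acar e r. Amul e r x (g i) = Azero} {x \<in> Acar e r. Amul e r x (g j) = Azero}"
          using comax' ij by simp
        then obtain u v where uv: "tauA x = Aadd u v" "u \<in> Acar e r" "Amul e r u (g i) = Azero"
            "v \<in> Acar e r" "Amul e r v (g j) = Azero"
          by (auto simp: A_sum_def)
        have "x = Aadd (tauA u) (tauA v)" using uv(1) xC by (metis tau_add tau_tau)
        moreover have "Amul e r (tauA u) (tauA (g i)) = Azero" using uv by (simp add: ann_tau_iff g_def)
        moreover have "Amul e r (tauA v) (tauA (g j)) = Azero" using uv by (simp add: ann_tau_iff g_def)
        ultimately show "x \<in> A_sum {x \<in> Acar e r. Amul e r x (tauA (g i)) = Azero} {x \<in> Acar e r. Amul e r x (tauA (g j)) = Azero}"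
          unfolding A_sum_def by (intro CollectI exI[of _ "tauA u"] exI[of _ "tauA v"]) simp
      qed
    qed
    then show "A_sum (A_ann e r (A_gen e r {red e r (tau_poly e (G i))}))
              (A_ann e r (A_gen e r {red e r (tau_poly e (G j))})) = Acar e r" using eq by simp
  qed
  show ?thesis using part1 part2 part3 by blast
qed

end
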